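(* Let $G=(V\cup\{s,t\},E)$ be an undirected series-parallel graph with source $s$ and sink $t$, let $x$ be a least core payoff of the corresponding Edge Path Coalitional Game, and let $e\in E$ be an edge contained in no minimum cardinality $s$-$t$ edge cut of $G$ (i.e., $C_e(G)=\emptyset$). Then $x_e=0$.
   Context: An undirected graph $G$ with source $s$ and sink $t$ is series-parallel if it can be reduced to a single edge between two vertices by repeatedly (1) replacing a pair of parallel edges by a single edge joining their common endpoints, and (2) replacing the two edges incident to a degree-2 vertex other than $s,t$ by a single edge (removing that vertex). $\mathcal{C}(G)$ denotes the set of minimum cardinality $s$-$t$ edge cuts of $G$ and $C_e(G)=\{S\in\mathcal{C}(G): e\in S\}$. The EPCG has players $N=E$ and $v(S)=1$ iff the edges of $S$ contain an $s$-$t$ path, else $0$. For payoff $x$, $e(x,S)=x(S)-v(S)$ with $x(S)=\sum_{i\in S}x_i$; the $\epsilon$-core is $\{x: x(N)=v(N),\ e(x,S)\ge-\epsilon\ \forall S\}$, and the least core is the $\epsilon$-core for the smallest $\epsilon$ for which it is non-empty (with payoffs $x_i\ge 0$). *)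

theory Defs
  imports Complex_Main "HOL-Library.Multiset"
begin

text \<open>Undirected multigraphs: a finite set E of edge identifiers, each edge with a
  two-element set of endpoints  ends e.  Series-parallel reductions act on the
  multiset of endpoint sets.\<close>

inductive sp_step :: "'v \<Rightarrow> 'v \<Rightarrow> 'v set multiset \<Rightarrow> 'v set multiset \<Rightarrow> bool"
  for s t :: 'v where
  parallel: "sp_step s t (M + {#{u, v}, {u, v}#}) (M + {#{u, v}#})"
| series: "\<lbrakk> w \<notin> {s, t}; u \<noteq> w; v \<noteq> w; \<forall>f \<in># M. w \<notin> f \<rbrakk>
           \<Longrightarrow> sp_step s t (M + {#{u, w}, {w, v}#}) (M + {#{u, v}#})"

definition series_parallel :: "'e set \<Rightarrow> ('e \<Rightarrow> 'v set) \<Rightarrow> 'v \<Rightarrow> 'v \<Rightarrow> bool" where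
  "series_parallel E ends s t \<longleftrightarrow>
     finite E \<and> s \<noteq> t \<and> (\<forall>e\<in>E. card (ends e) = 2) \<and>
     (sp_step s t)\<^sup>*\<^sup>* (image_mset ends (mset_set E)) {#{s, t}#}"

definition has_st_path :: "('e \<Rightarrow> 'v set) \<Rightarrow> 'v \<Rightarrow> 'v \<Rightarrow> 'e set \<Rightarrow> bool" where
  "has_st_path ends s t S \<longleftrightarrow>
     (\<exists>vs. vs \<noteq> [] \<and> hd vs = s \<and> last vs = t \<and> distinct vs \<and>
        (\<forall>i. Suc i < length vs \<longrightarrow> (\<exists>e\<in>S. ends e = {vs ! i, vs ! Suc i})))"

definition st_cut :: "'e set \<Rightarrow> ('e \<Rightarrow> 'v set) \<Rightarrow> 'v \<Rightarrow> 'v \<Rightarrow> 'e set \<Rightarrow> bool" where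
  "st_cut E ends s t C \<longleftrightarrow> C \<subseteq> E \<and> \<not> has_st_path ends s t (E - C)"

definition min_cuts :: "'e set \<Rightarrow> ('e \<Rightarrow> 'v set) \<Rightarrow> 'v \<Rightarrow> 'v \<Rightarrow> 'e set set" where
  "min_cuts E ends s t =
     {C. st_cut E ends s t C \<and> (\<forall>C'. st_cut E ends s t C' \<longrightarrow> card C \<le> card C')}"

definition cuts_containing :: "'e set \<Rightarrow> ('e \<Rightarrow> 'v set) \<Rightarrow> 'v \<Rightarrow> 'v \<Rightarrow> 'e \<Rightarrow> 'e set set" where
  "cuts_containing E ends s t e = {C \<in> min_cuts E ends s t. e \<in> C}"

definition epcg_value :: "('e \<Rightarrow> 'v set) \<Rightarrow> 'v \<Rightarrow> 'v \<Rightarrow> 'e set \<Rightarrow> real" where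
  "epcg_value ends s t S = (if has_st_path ends s t S then 1 else 0)"

definition excess :: "('e \<Rightarrow> 'v set) \<Rightarrow> 'v \<Rightarrow> 'v \<Rightarrow> ('e \<Rightarrow> real) \<Rightarrow> 'e set \<Rightarrow> real" where
  "excess ends s t x S = sum x S - epcg_value ends s t S"

definition eps_core :: "'e set \<Rightarrow> ('e \<Rightarrow> 'v set) \<Rightarrow> 'v \<Rightarrow> 'v \<Rightarrow> real \<Rightarrow> ('e \<Rightarrow> real) set" where
  "eps_core E ends s t \<epsilon> =
     {x. (\<forall>i\<in>E. 0 \<le> x i) \<and> sum x E = epcg_value ends s t E \<and>
         (\<forall>S. S \<subseteq> E \<longrightarrow> excess ends s t x S \<ge> - \<epsilon>)}"

definition least_core :: "'e set \<Rightarrow> ('e \<Rightarrow> 'v set) \<Rightarrow> 'v \<Rightarrow> 'v \<Rightarrow> ('e \<Rightarrow> real) set" where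
  "least_core E ends s t =
     {x. \<exists>\<epsilon>. x \<in> eps_core E ends s t \<epsilon> \<and>
            (\<forall>\<epsilon>'. eps_core E ends s t \<epsilon>' \<noteq> {} \<longrightarrow> \<epsilon> \<le> \<epsilon>')}"

end

theory Submission
  imports Defs
begin

lemma path_mono:
  assumes "has_st_path ends s t S" "S \<subseteq> T" shows "has_st_path ends s t T"
proof -
  from assms(1) obtain vs where "vs \<noteq> []" "hd vs = s" "last vs = t" "distinct vs"
    and st: "\<forall>i. Suc i < length vs \<longrightarrow> (\<exists>e\<in>S. ends e = {vs ! i, vs ! Suc i})"
    unfolding has_st_path_def by blast
  moreover have "\<forall>i. Suc i < length vs \<longrightarrow> (\<exists>e\<in>T. ends e = {vs ! i, vs ! Suc i})"
    using st assms(2) by blast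
  ultimately show ?thesis unfolding has_st_path_def by blast
qed

lemma path_refl: "has_st_path ends s s S"
  unfolding has_st_path_def by (rule exI[of _ "[s]"]) auto

lemma path_empty: assumes st: "s \<noteq> t" shows " \<not> has_st_path ends s t {}"
proof
  assume "has_st_path ends s t {}"
  then obtain vs where vs: "vs \<noteq> []" "hd vs = s" "last vs = t"
    "\<forall>i. Suc i < length vs \<longrightarrow> (\<exists>e\<in>{}. ends e = {vs ! i, vs ! Suc i})"
    unfolding has_st_path_def by blast
  show False
  proof (cases "length vs = 1")
    case True
    then obtain a where "vs = [a]" by (cases vs) auto
    then show False using vs st by simp
  next
    case False
    then have "Suc 0 < length vs" using vs(1) by (cases vs) auto
    then show False using vs(4) by blast
  qed
qed

lemma cross_list: "vs \<noteq> [] \<Longrightarrow> hd vs \<in> A \<Longrightarrow> last vs \<notin> A \<Longrightarrow>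
  \<exists>i. Suc i < length vs \<and> vs ! i \<in> A \<and> vs ! Suc i \<notin> A"
proof (induction vs)
  case Nil then show ?case by simp
next
  case (Cons a xs)
  show ?case
  proof (cases "xs = []")
    case True then show ?thesis using Cons by simp
  next
    case False
    show ?thesis
    proof (cases "hd xs \<in> A")
      case True
      with Cons False obtain i where "Suc i < length xs" "xs ! i \<in> A" "xs ! Suc i \<notin> A" by auto
      then show ?thesis by (intro exI[of _ "Suc i"]) auto
    next
      case f2: False
      then show ?thesis using Cons False
        by (intro exI[of _ 0]) (auto simp: hd_conv_nth)
    qed
  qed
qed

lemma path_cross:
  assumes "has_st_path ends s t S" "s \<in> A" "t \<notin> A"
  shows "\<exists>e\<in>S. \<exists>u v. ends e = {u, v} \<and> u \<in> A \<and> v \<notin> A"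
proof -
  obtain vs where vs: "vs \<noteq> []" "hd vs = s" "last vs = t"
    "\<forall>i. Suc i < length vs \<longrightarrow> (\<exists>e\<in>S. ends e = {vs ! i, vs ! Suc i})"
    using assms(1) unfolding has_st_path_def by blast
  then obtain i where "Suc i < length vs" "vs ! i \<in> A" "vs ! Suc i \<notin> A"
    using cross_list[of vs A] assms by auto
  then show ?thesis using vs(4) by blast
qed

lemma path_ext:
  assumes "has_st_path ends s u S" "ends e = {u, v}"
  shows "has_st_path ends s v (insert e S)"
proof -
  obtain vs where vs: "vs \<noteq> []" "hd vs = s" "last vs = u" "distinct vs"
    "\<forall>i. Suc i < length vs \<longrightarrow> (\<exists>e\<in>S. ends e = {vs ! i, vs ! Suc i})"
    using assms(1) unfolding has_st_path_def by blast
  show ?thesis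
  proof (cases "v \<in> set vs")
    case True
    then obtain j where j: "j < length vs" "vs ! j = v" by (meson in_set_conv_nth)
    let ?ws = "take (Suc j) vs"
    have "?ws \<noteq> []" using vs(1) by simp
    moreover have "hd ?ws = s" using vs(1,2) by (simp add: hd_take)
    moreover have "last ?ws = v" using j by (simp add: take_Suc_conv_app_nth) 
    moreover have "distinct ?ws" using vs(4) by simp
    moreover have "\<forall>i. Suc i < length ?ws \<longrightarrow> (\<exists>e\<in>insert e S. ends e = {?ws ! i, ?ws ! Suc i})"
      using vs(5) by auto
    ultimately show ?thesis unfolding has_st_path_def by blast
  next
    case False
    let ?ws = "vs @ [v]"
    have "?ws \<noteq> []" by simp
    moreover have "hd ?ws = s" using vs(1,2) by simp
    moreover have "last ?ws = v" by simp
    moreover have "distinct ?ws" using vs(4) False by simp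
    moreover have "\<forall>i. Suc i < length ?ws \<longrightarrow> (\<exists>e\<in>insert e S. ends e = {?ws ! i, ?ws ! Suc i})"
    proof (intro allI impI)
      fix i assume i: "Suc i < length ?ws"
      show "\<exists>e\<in>insert e S. ends e = {?ws ! i, ?ws ! Suc i}"
      proof (cases "Suc i < length vs")
        case True then show ?thesis using vs(5) by (auto simp: nth_append)
      next
        case False
        then have "i = length vs - 1" "Suc i = length vs" using i by auto
        then have "?ws ! i = u" "?ws ! Suc i = v" using vs(1,3)
          by (auto simp: nth_append last_conv_nth)
        then show ?thesis using assms(2) by auto
      qed
    qed
    ultimately show ?thesis unfolding has_st_path_def by blast
  qed
qed

definition dlt :: "('v \<Rightarrow> real) \<Rightarrow> 'v set \<Rightarrow> real" where
  "dlt p A = Max (p ` A) - Min (p ` A)"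

lemma dlt_pair: "dlt p {u, v} = \<bar>p u - p v\<bar>"
  by (auto simp: dlt_def max_def min_def)

lemma ends_pair: "card A = 2 \<Longrightarrow> \<exists>u v. A = {u, v}"
  by (auto simp: card_2_iff)

lemma level:
  fixes p :: "'v \<Rightarrow> real" and c :: nat and ends :: "'e \<Rightarrow> 'v set"
  assumes fin: "finite E" and cards: "\<forall>e\<in>E. card (ends e) = 2"
    and cutc: "\<forall>C. st_cut E ends s t C \<longrightarrow> c \<le> card C"
    and cute: "\<forall>C. st_cut E ends s t C \<longrightarrow> e0 \<in> C \<longrightarrow> c + 1 \<le> card C"
    and e0: "e0 \<in> E"
  shows "(\<forall>v. 0 \<le> p v) \<Longrightarrow> p s = 0 \<Longrightarrow> card (p ` (insert t (\<Union>(ends ` E))) - {0}) = n \<Longrightarrow>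
     real c * p t + dlt p (ends e0) \<le> (\<Sum>e\<in>E. dlt p (ends e))"
proof (induction n arbitrary: p rule: less_induct)
  case (less n p)
  define V where "V = insert t (\<Union>(ends ` E))"
  have fe: "\<And>e. e \<in> E \<Longrightarrow> finite (ends e)"
    using cards by (metis card.infinite zero_neq_numeral)
  have finV: "finite V" unfolding V_def using fin fe by auto
  have dnn: "\<And>q e. e \<in> E \<Longrightarrow> 0 \<le> dlt q (ends e)"
  proof -
    fix q e assume "e \<in> E"
    then obtain u v where "ends e = {u, v}" using ends_pair cards by blast
    then show "0 \<le> dlt q (ends e)" by (simp add: dlt_pair)
  qed
  show ?case
  proof (cases "p t = 0")
    case True
    have "dlt p (ends e0) \<le> (\<Sum>e\<in>E. dlt p (ends e))"
      by (rule member_le_sum) (use e0 fin dnn in auto)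
    then show ?thesis using True by simp
  next
    case False
    hence pt: "p t > 0" using less.prems(1) by (simp add: order_less_le)
    define P where "P = p ` V - {0}"
    have finP: "finite P" using finV by (simp add: P_def)
    have tP: "p t \<in> P" using False by (simp add: P_def V_def)
    define a where "a = Min P"
    have aP: "a \<in> P" unfolding a_def using finP tP by (intro Min_in) auto
    have apos: "a > 0" using aP less.prems(1) by (auto simp: P_def order_less_le)
    have ale: "a \<le> p t" unfolding a_def using finP tP by simp
    have low: "\<And>v. v \<in> V \<Longrightarrow> p v = 0 \<or> a \<le> p v"
    proof -
      fix v assume "v \<in> V"
      show "p v = 0 \<or> a \<le> p v"
      proof (cases "p v = 0")
        case False
        then have "p v \<in> P" using \<open>v \<in> V\<close> by (simp add: P_def)
        then show ?thesis unfolding a_def using finP by simp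
      qed simp
    qed
    define C where "C = {e\<in>E. \<exists>u\<in>ends e. \<exists>w\<in>ends e. p u = 0 \<and> p w \<noteq> 0}"
    have Csub: "C \<subseteq> E" by (auto simp: C_def)
    have cut: "st_cut E ends s t C"
      unfolding st_cut_def
    proof
      show "C \<subseteq> E" by (rule Csub)
      show "\<not> has_st_path ends s t (E - C)"
      proof
        assume "has_st_path ends s t (E - C)"
        from path_cross[OF this, of "{v. p v = 0}"] obtain f u w where
          "f \<in> E - C" "ends f = {u,w}" "p u = 0" "p w \<noteq> 0"
          using less.prems(2) pt by auto
        then show False by (auto simp: C_def)
      qed
    qed
    define q where "q = (\<lambda>v. max (p v - a) 0)"
    have q0: "\<forall>v. 0 \<le> q v" by (simp add: q_def)
    have qs: "q s = 0" using less.prems(2) apos by (simp add: q_def)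
    have sub: "q ` V - {0} \<subseteq> (\<lambda>b. b - a) ` (P - {a})"
    proof
      fix y assume "y \<in> q ` V - {0}"
      then obtain v where v: "v \<in> V" "y = q v" "q v \<noteq> 0" by auto
      then have pv: "p v - a > 0" by (auto simp: q_def max_def split: if_splits)
      then have "p v \<in> P - {a}" "y = p v - a" using v apos by (auto simp: P_def q_def)
      then show "y \<in> (\<lambda>b. b - a) ` (P - {a})" by auto
    qed
    have "card (q ` V - {0}) \<le> card ((\<lambda>b. b-a) ` (P - {a}))"
      by (rule card_mono) (use finP sub in auto)
    also have "\<dots> \<le> card (P - {a})" by (rule card_image_le) (use finP in auto)
    also have "\<dots> < card P" by (rule card_Diff1_less[OF finP aP])
    finally have lt: "card (q ` V - {0}) < n" using less.prems(3) by (simp add: P_def V_def)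
    have IH: "real c * q t + dlt q (ends e0) \<le> (\<Sum>e\<in>E. dlt q (ends e))"
      using less.IH[of "card (q ` V - {0})" q] lt q0 qs by (simp add: V_def)
    have qt: "q t = p t - a" using ale by (simp add: q_def)
    have edge: "\<And>e. e \<in> E \<Longrightarrow> dlt p (ends e) = dlt q (ends e) + (if e \<in> C then a else 0)"
    proof -
      fix e assume e: "e \<in> E"
      obtain u w where uw: "ends e = {u,w}" using ends_pair cards e by blast
      have "u \<in> V" "w \<in> V" using e uw by (auto simp: V_def)
      hence "p u = 0 \<or> a \<le> p u" "p w = 0 \<or> a \<le> p w" using low by auto
      moreover have "e \<in> C \<longleftrightarrow> (p u = 0 \<and> p w \<noteq> 0) \<or> (p w = 0 \<and> p u \<noteq> 0)"
        using e uw by (auto simp: C_def)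
      ultimately show "dlt p (ends e) = dlt q (ends e) + (if e \<in> C then a else 0)"
        using uw apos by (auto simp: dlt_pair q_def max_def)
    qed
    have sumC: "(\<Sum>e\<in>E. if e \<in> C then a else 0) = a * real (card C)"
    proof -
      have "(\<Sum>e\<in>E. if e \<in> C then a else 0) = (\<Sum>e\<in>{e\<in>E. e\<in>C}. a)"
        by (rule sum.inter_filter[OF fin, symmetric])
      also have "{e\<in>E. e\<in>C} = C" using Csub by auto
      finally show ?thesis by simp
    qed
    have sumeq: "(\<Sum>e\<in>E. dlt p (ends e)) = (\<Sum>e\<in>E. dlt q (ends e)) + a * real (card C)"
    proof -
      have "(\<Sum>e\<in>E. dlt p (ends e)) = (\<Sum>e\<in>E. dlt q (ends e) + (if e \<in> C then a else 0))"
        by (rule sum.cong) (simp_all add: edge)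
      also have "\<dots> = (\<Sum>e\<in>E. dlt q (ends e)) + (\<Sum>e\<in>E. if e \<in> C then a else 0)"
        by (simp add: sum.distrib)
      finally show ?thesis using sumC by simp
    qed
    have cC: "a * (real c + (if e0 \<in> C then 1 else 0)) \<le> a * real (card C)"
    proof -
      have "real c + (if e0 \<in> C then 1 else 0) \<le> real (card C)"
        using cutc cute cut by (cases "e0 \<in> C") force+
      then show ?thesis using apos by simp
    qed
    have e0eq: "dlt p (ends e0) = dlt q (ends e0) + (if e0 \<in> C then a else 0)"
      using edge e0 by simp
    have ct: "real c * p t = real c * q t + real c * a" by (simp add: qt algebra_simps)
    show ?thesis
      using IH sumeq cC e0eq ct by (cases "e0 \<in> C") (simp_all add: algebra_simps)
  qed
qed

theorem lemma1:
  fixes E :: "'e set" and ends :: "'e \<Rightarrow> 'v set" and s t :: 'v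
    and x :: "'e \<Rightarrow> real" and e :: 'e
  assumes "series_parallel E ends s t"
    and "x \<in> least_core E ends s t"
    and "e \<in> E"
    and "cuts_containing E ends s t e = {}"
  shows "x e = 0"
proof -
  from assms(1) have fin: "finite E" and st: "s \<noteq> t" and cards: "\<forall>e\<in>E. card (ends e) = 2"
    by (auto simp: series_parallel_def)
  from assms(2) obtain \<epsilon> where xin: "x \<in> eps_core E ends s t \<epsilon>"
    and epsmin: "\<forall>\<epsilon>'. eps_core E ends s t \<epsilon>' \<noteq> {} \<longrightarrow> \<epsilon> \<le> \<epsilon>'"
    by (auto simp: least_core_def)
  from xin have xnn: "\<forall>i\<in>E. 0 \<le> x i" and xsum: "sum x E = epcg_value ends s t E"
    and xex: "\<forall>S. S \<subseteq> E \<longrightarrow> - \<epsilon> \<le> excess ends s t x S"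
    by (auto simp: eps_core_def)
  show ?thesis
  proof (cases "has_st_path ends s t E")
    case False
    then have "sum x E = 0" using xsum by (simp add: epcg_value_def)
    then show ?thesis using sum_nonneg_eq_0_iff[OF fin] xnn assms(3) by blast
  next
    case True
    have Ecut: "st_cut E ends s t E" by (simp add: st_cut_def path_empty st)
    define c where "c = (LEAST n. \<exists>C. st_cut E ends s t C \<and> card C = n)"
    obtain C0 where C0: "st_cut E ends s t C0" "card C0 = c"
      using LeastI_ex[of "\<lambda>n. \<exists>C. st_cut E ends s t C \<and> card C = n"] Ecut
      unfolding c_def by blast
    have cmin: "\<forall>C. st_cut E ends s t C \<longrightarrow> c \<le> card C"
      unfolding c_def by (auto intro: Least_le)
    have cute: "\<forall>C. st_cut E ends s t C \<longrightarrow> e \<in> C \<longrightarrow> c + 1 \<le> card C"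
    proof (intro allI impI)
      fix C assume C: "st_cut E ends s t C" "e \<in> C"
      have "card C \<noteq> c"
      proof
        assume "card C = c"
        then have "C \<in> cuts_containing E ends s t e" using C cmin
          by (simp add: cuts_containing_def min_cuts_def)
        then show False using assms(4) by simp
      qed
      then show "c + 1 \<le> card C" using cmin C by fastforce
    qed
    have C0sub: "C0 \<subseteq> E" using C0 by (simp add: st_cut_def)
    have finC0: "finite C0" using fin C0sub finite_subset by blast
    have cpos: "c \<ge> 1"
    proof (rule ccontr)
      assume "\<not> c \<ge> 1" then have "card C0 = 0" using C0 by simp
      then have "C0 = {}" using finC0 by simp
      then show False using C0(1) True by (simp add: st_cut_def)
    qed
    define y where "y = (\<lambda>i. if i \<in> C0 then 1 / real c else 0)"
    have yin: "y \<in> eps_core E ends s t (1 - 1 / real c)"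
      unfolding eps_core_def
    proof (intro CollectI conjI allI impI ballI)
      fix i show "0 \<le> y i" by (simp add: y_def)
    next
      have "sum y E = sum y C0"
        using fin C0sub by (intro sum.mono_neutral_right) (auto simp: y_def)
      also have "\<dots> = real (card C0) * (1 / real c)" by (simp add: y_def)
      also have "\<dots> = 1" using C0(2) cpos by simp
      finally show "sum y E = epcg_value ends s t E" using True by (simp add: epcg_value_def)
    next
      fix S assume S: "S \<subseteq> E"
      show "- (1 - 1 / real c) \<le> excess ends s t y S"
      proof (cases "has_st_path ends s t S")
        case False
        have "0 \<le> sum y S" by (auto simp: y_def intro: sum_nonneg)
        moreover have "1 / real c \<le> 1" using cpos by simp
        ultimately show ?thesis using False by (simp add: excess_def epcg_value_def)
      next
        case True2: True
        have "\<not> S \<subseteq> E - C0"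
        proof
          assume "S \<subseteq> E - C0"
          then have "has_st_path ends s t (E - C0)" by (rule path_mono[OF True2])
          then show False using C0(1) by (simp add: st_cut_def)
        qed
        then obtain i where i: "i \<in> S" "i \<in> C0" using S by blast
        have finS: "finite S" using fin S finite_subset by blast
        have "y i \<le> sum y S" by (rule member_le_sum) (use i finS in \<open>auto simp: y_def\<close>)
        then have "1 / real c \<le> sum y S" using i by (simp add: y_def)
        then show ?thesis using True2 by (simp add: excess_def epcg_value_def)
      qed
    qed
    have epsle: "\<epsilon> \<le> 1 - 1 / real c" using epsmin yin by blast
    define D where "D = 1 - \<epsilon>"
    have Dge: "1 / real c \<le> D" using epsle by (simp add: D_def)
    have "0 < 1 / real c" using cpos by simp
    then have Dpos: "0 < D" using Dge by linarith
    have xpath: "\<And>S. S \<subseteq> E \<Longrightarrow> has_st_path ends s t S \<Longrightarrow> D \<le> sum x S"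
    proof -
      fix S assume S: "S \<subseteq> E" "has_st_path ends s t S"
      then have "- \<epsilon> \<le> excess ends s t x S" using xex by blast
      then have "- \<epsilon> \<le> sum x S - 1" using S(2) by (simp add: excess_def epcg_value_def)
      then show "D \<le> sum x S" by (simp add: D_def)
    qed
    have xsnn: "\<And>S. S \<subseteq> E \<Longrightarrow> 0 \<le> sum x S" using xnn by (meson subsetD sum_nonneg)
    define R where "R = (\<lambda>v. insert D ((\<lambda>S. sum x S) ` {S. S \<subseteq> E \<and> has_st_path ends s v S}))"
    define d where "d = (\<lambda>v. Min (R v))"
    have finR: "\<And>v. finite (R v)"
    proof -
      fix v
      have "finite {S. S \<subseteq> E \<and> has_st_path ends s v S}"
        by (rule finite_subset[of _ "Pow E"]) (auto simp: fin)
      then show "finite (R v)" by (simp add: R_def)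
    qed
    have dle: "\<And>v r. r \<in> R v \<Longrightarrow> d v \<le> r" using finR by (simp add: d_def)
    have din: "\<And>v. d v \<in> R v" using finR unfolding d_def by (intro Min_in) (auto simp: R_def)
    have Rnn: "\<And>v r. r \<in> R v \<Longrightarrow> 0 \<le> r"
    proof -
      fix v r assume "r \<in> R v"
      then have "r = D \<or> (\<exists>S. S \<subseteq> E \<and> r = sum x S)" by (auto simp: R_def)
      then show "0 \<le> r"
      proof
        assume "r = D" then show ?thesis using Dpos by simp
      next
        assume "\<exists>S. S \<subseteq> E \<and> r = sum x S"
        then obtain S where "S \<subseteq> E" "r = sum x S" by blast
        then show ?thesis using xsnn by simp
      qed
    qed
    have dnn: "\<forall>v. 0 \<le> d v" using din Rnn by blast
    have ds: "d s = 0"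
    proof -
      have "0 \<in> R s" unfolding R_def using path_refl[of ends s "{}"]
        by (auto intro!: image_eqI[of _ _ "{}"])
      then show ?thesis using dle dnn by (meson order_antisym)
    qed
    have dt: "d t = D"
    proof -
      have "D \<in> R t" by (simp add: R_def)
      moreover have "\<And>r. r \<in> R t \<Longrightarrow> D \<le> r" using xpath by (auto simp: R_def)
      ultimately show ?thesis using dle din by (meson order_antisym)
    qed
    have lip: "\<And>f u v. f \<in> E \<Longrightarrow> ends f = {u,v} \<Longrightarrow> d v \<le> d u + x f"
    proof -
      fix f u v assume f: "f \<in> E" "ends f = {u,v}"
      from din[of u] consider "d u = D"
        | S where "S \<subseteq> E" "has_st_path ends s u S" "d u = sum x S"
        unfolding R_def by auto
      then show "d v \<le> d u + x f"
      proof cases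
        case 1
        have "d v \<le> D" by (rule dle) (simp add: R_def)
        then show ?thesis using 1 xnn f by fastforce
      next
        case 2
        have "insert f S \<subseteq> E" using 2 f by auto
        moreover have "has_st_path ends s v (insert f S)" using path_ext[OF 2(2) f(2)] .
        ultimately have "d v \<le> sum x (insert f S)" by (intro dle) (auto simp: R_def)
        also have "\<dots> \<le> sum x S + x f"
          using finite_subset[OF 2(1) fin] xnn f by (cases "f \<in> S") (auto simp: insert_absorb)
        finally show ?thesis using 2 by simp
      qed
    qed
    have dlt_le: "\<And>f. f \<in> E \<Longrightarrow> dlt d (ends f) \<le> x f"
    proof -
      fix f assume f: "f \<in> E"
      obtain u v where uv: "ends f = {u,v}" using ends_pair cards f by blast
      have "d v \<le> d u + x f" using lip f uv by blast
      moreover have "d u \<le> d v + x f" using lip[of f v u] f uv by (simp add: insert_commute)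
      ultimately show "dlt d (ends f) \<le> x f" using uv by (simp add: dlt_pair abs_le_iff)
    qed
    have lev: "real c * d t + dlt d (ends e) \<le> (\<Sum>f\<in>E. dlt d (ends f))"
      using level[OF fin cards cmin cute assms(3) dnn ds refl] .
    have s1: "(\<Sum>f\<in>E. dlt d (ends f)) = dlt d (ends e) + (\<Sum>f\<in>E-{e}. dlt d (ends f))"
      using sum.remove[OF fin assms(3)] .
    have s2: "(\<Sum>f\<in>E-{e}. dlt d (ends f)) \<le> (\<Sum>f\<in>E-{e}. x f)"
      by (rule sum_mono) (auto intro: dlt_le)
    have s3: "sum x E = x e + (\<Sum>f\<in>E-{e}. x f)" using sum.remove[OF fin assms(3)] .
    have s4: "sum x E = 1" using xsum True by (simp add: epcg_value_def)
    have s5: "1 \<le> real c * D"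
    proof -
      have "real c * (1 / real c) \<le> real c * D" using Dge by (intro mult_left_mono) auto
      then show ?thesis using cpos by simp
    qed
    have lev': "real c * D + dlt d (ends e) \<le> (\<Sum>f\<in>E. dlt d (ends f))" using lev dt by simp
    have "x e \<le> 0" using lev' s1 s2 s3 s4 s5 by linarith
    then show ?thesis using xnn assms(3) by force
  qed
qed

end
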